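(* Let $\mathcal L$ be a planar graph embedded in the plane such that: (i) the bounded faces of $\mathcal L$ are $2$-colorable with colors gray and white; (ii) all gray faces of $\mathcal L$ are triangles; (iii) every edge of $\mathcal L$ belongs to precisely one gray triangle; (iv) exactly one angle (corner) of each gray triangle is marked; and (v) each vertex of $\mathcal L$ is incident to at most two unmarked angles of gray triangles. Then $\operatorname{col}_{ve}(\mathcal L) \le 4$.
   Context: The vertex-edge marking game on a graph $G=(V,E)$ (finite or infinite) is played by Alice, who marks vertices, and Bob, who marks edges. Initially nothing is marked. The game proceeds in rounds $r=1,2,\dots$; in each round Alice first marks one unmarked vertex, then Bob marks one unmarked edge. For a finite graph the game ends when either player has no move; for an infinite graph it continues forever. After round $r$, the vertex score of $v$ is $0$ if $v$ is marked, and otherwise the number of marked edges incident to $v$. The $r$-round score is the supremum over $v\in V$ of the vertex scores after round $r$, and the final score of the game is the supremum of the $r$-round scores over all rounds. Bob has a winning strategy for score $s$ if, whatever Alice plays, Bob can force the final score to be at least $s$. The vertex-edge coloring number is $\operatorname{col}_{ve}(G)=\sup\{s : \text{Bob has a winning strategy for score } s\}+1$. An angle of a gray triangle is one of its three corners, i.e. a pair (triangle, vertex of the triangle); a vertex is incident to an angle if it is the vertex of that corner. *)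

theory Defs
  imports "HOL-Analysis.Analysis" "HOL-Library.Extended_Nat"
begin

text \<open>A history of the game is a
  list of moves; moves at even positions are Alice's (vertices), at odd
  positions Bob's (edges).\<close>

datatype 'v move = AMove 'v | BMove "'v set"

definition marked_vertices :: "'v move list \<Rightarrow> 'v set" where
  "marked_vertices h = {v. AMove v \<in> set h}"

definition marked_edges :: "'v move list \<Rightarrow> 'v set set" where
  "marked_edges h = {e. BMove e \<in> set h}"

definition legal_hist :: "'v set \<Rightarrow> 'v set set \<Rightarrow> 'v move list \<Rightarrow> bool" where
  "legal_hist V E h \<longleftrightarrow>
     (\<forall>i < length h.
        (even i \<longrightarrow> (\<exists>v. h ! i = AMove v \<and> v \<in> V \<and> v \<notin> marked_vertices (take i h))) \<and>
        (odd i \<longrightarrow> (\<exists>e. h ! i = BMove e \<and> e \<in> E \<and> e \<notin> marked_edges (take i h))))"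

text \<open>The game has ended: the player to move has no legal move.\<close>
definition terminal :: "'v set \<Rightarrow> 'v set set \<Rightarrow> 'v move list \<Rightarrow> bool" where
  "terminal V E h \<longleftrightarrow>
     (if even (length h) then V \<subseteq> marked_vertices h else E \<subseteq> marked_edges h)"

definition vertex_score :: "'v move list \<Rightarrow> 'v \<Rightarrow> nat" where
  "vertex_score h v =
     (if v \<in> marked_vertices h then 0 else card {e \<in> marked_edges h. v \<in> e})"

text \<open>Score of a position (supremum of vertex scores; it is a bounded set of
  naturals, bounded by the length of the history).\<close>
definition score :: "'v set \<Rightarrow> 'v move list \<Rightarrow> nat" where
  "score V h = (SUP v\<in>V. vertex_score h v)"

definition final_score_fin :: "'v set \<Rightarrow> 'v move list \<Rightarrow> enat" where
  "final_score_fin V h = (SUP n\<in>{..length h}. enat (score V (take n h)))"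

definition final_score_inf :: "'v set \<Rightarrow> (nat \<Rightarrow> 'v move) \<Rightarrow> enat" where
  "final_score_inf V f = (SUP n. enat (score V (map f [0..<n])))"

definition consistent :: "('v move list \<Rightarrow> 'v set) \<Rightarrow> 'v move list \<Rightarrow> bool" where
  "consistent \<sigma> h \<longleftrightarrow> (\<forall>i < length h. odd i \<longrightarrow> h ! i = BMove (\<sigma> (take i h)))"

definition legal_bob_strategy ::
    "'v set \<Rightarrow> 'v set set \<Rightarrow> ('v move list \<Rightarrow> 'v set) \<Rightarrow> bool" where
  "legal_bob_strategy V E \<sigma> \<longleftrightarrow>
     (\<forall>h. legal_hist V E h \<and> consistent \<sigma> h \<and> odd (length h) \<and> \<not> terminal V E h
          \<longrightarrow> \<sigma> h \<in> E \<and> \<sigma> h \<notin> marked_edges h)"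

definition bob_wins :: "'v set \<Rightarrow> 'v set set \<Rightarrow> nat \<Rightarrow> bool" where
  "bob_wins V E s \<longleftrightarrow>
     (\<exists>\<sigma>. legal_bob_strategy V E \<sigma> \<and>
        (\<forall>h. legal_hist V E h \<and> consistent \<sigma> h \<and> terminal V E h
              \<longrightarrow> final_score_fin V h \<ge> enat s) \<and>
        (\<forall>f. (\<forall>n. legal_hist V E (map f [0..<n]) \<and> consistent \<sigma> (map f [0..<n]))
              \<longrightarrow> final_score_inf V f \<ge> enat s))"

definition col_ve :: "'v set \<Rightarrow> 'v set set \<Rightarrow> enat" where
  "col_ve V E = Sup {enat s | s. bob_wins V E s} + 1"

definition simple_graph :: "'v set \<Rightarrow> 'v set set \<Rightarrow> bool" where
  "simple_graph V E \<longleftrightarrow> (\<forall>e\<in>E. e \<subseteq> V \<and> card e = 2)"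

definition plane_embedding ::
    "'v set \<Rightarrow> 'v set set \<Rightarrow> ('v \<Rightarrow> complex) \<Rightarrow> ('v set \<Rightarrow> real \<Rightarrow> complex) \<Rightarrow> bool" where
  "plane_embedding V E pos arc_of \<longleftrightarrow>
     inj_on pos V \<and>
     (\<forall>e\<in>E. arc (arc_of e) \<and> {pathstart (arc_of e), pathfinish (arc_of e)} = pos ` e) \<and>
     (\<forall>e\<in>E. \<forall>e'\<in>E. e \<noteq> e' \<longrightarrow>
         path_image (arc_of e) \<inter> path_image (arc_of e') \<subseteq> pos ` (e \<inter> e')) \<and>
     (\<forall>e\<in>E. \<forall>v\<in>V. pos v \<in> path_image (arc_of e) \<longrightarrow> v \<in> e)"

definition drawing :: "'v set \<Rightarrow> 'v set set \<Rightarrow> ('v \<Rightarrow> complex) \<Rightarrow> ('v set \<Rightarrow> real \<Rightarrow> complex) \<Rightarrow> complex set" where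
  "drawing V E pos arc_of = pos ` V \<union> (\<Union>e\<in>E. path_image (arc_of e))"

definition faces :: "'v set \<Rightarrow> 'v set set \<Rightarrow> ('v \<Rightarrow> complex) \<Rightarrow> ('v set \<Rightarrow> real \<Rightarrow> complex) \<Rightarrow> complex set set" where
  "faces V E pos arc_of = components (- drawing V E pos arc_of)"

definition bounded_faces :: "'v set \<Rightarrow> 'v set set \<Rightarrow> ('v \<Rightarrow> complex) \<Rightarrow> ('v set \<Rightarrow> real \<Rightarrow> complex) \<Rightarrow> complex set set" where
  "bounded_faces V E pos arc_of = {F \<in> faces V E pos arc_of. bounded F}"

definition faces_adjacent ::
    "'v set set \<Rightarrow> ('v set \<Rightarrow> real \<Rightarrow> complex) \<Rightarrow> complex set \<Rightarrow> complex set \<Rightarrow> bool" where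
  "faces_adjacent E arc_of F1 F2 \<longleftrightarrow>
     (\<exists>e\<in>E. path_image (arc_of e) \<subseteq> frontier F1 \<inter> frontier F2)"

text \<open>(i): gray/white is a proper 2-colouring of the bounded faces
  (gray F true = gray, false = white).\<close>
definition proper_face_2coloring ::
    "'v set \<Rightarrow> 'v set set \<Rightarrow> ('v \<Rightarrow> complex) \<Rightarrow> ('v set \<Rightarrow> real \<Rightarrow> complex)
       \<Rightarrow> (complex set \<Rightarrow> bool) \<Rightarrow> bool" where
  "proper_face_2coloring V E pos arc_of gray \<longleftrightarrow>
     (\<forall>F1\<in>bounded_faces V E pos arc_of. \<forall>F2\<in>bounded_faces V E pos arc_of.
        F1 \<noteq> F2 \<and> faces_adjacent E arc_of F1 F2 \<longrightarrow> gray F1 \<noteq> gray F2)"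

definition gray_faces ::
    "'v set \<Rightarrow> 'v set set \<Rightarrow> ('v \<Rightarrow> complex) \<Rightarrow> ('v set \<Rightarrow> real \<Rightarrow> complex)
       \<Rightarrow> (complex set \<Rightarrow> bool) \<Rightarrow> complex set set" where
  "gray_faces V E pos arc_of gray = {F \<in> bounded_faces V E pos arc_of. gray F}"

definition triangle_face ::
    "'v set set \<Rightarrow> ('v set \<Rightarrow> real \<Rightarrow> complex) \<Rightarrow> complex set \<Rightarrow> 'v set \<Rightarrow> bool" where
  "triangle_face E arc_of F t \<longleftrightarrow>
     (\<exists>a b c. t = {a, b, c} \<and> a \<noteq> b \<and> b \<noteq> c \<and> a \<noteq> c \<and>
        {a, b} \<in> E \<and> {b, c} \<in> E \<and> {a, c} \<in> E \<and>
        frontier F = path_image (arc_of {a, b}) \<union> path_image (arc_of {b, c})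
                      \<union> path_image (arc_of {a, c}))"

definition gray_triangles ::
    "'v set \<Rightarrow> 'v set set \<Rightarrow> ('v \<Rightarrow> complex) \<Rightarrow> ('v set \<Rightarrow> real \<Rightarrow> complex)
       \<Rightarrow> (complex set \<Rightarrow> bool) \<Rightarrow> 'v set set" where
  "gray_triangles V E pos arc_of gray =
     {t. \<exists>F\<in>gray_faces V E pos arc_of gray. triangle_face E arc_of F t}"

end

theory Submission
  imports Defs
begin

definition Qs :: "'v set \<Rightarrow> 'v set set \<Rightarrow> 'v \<Rightarrow> 'v set \<Rightarrow> bool" where
 "Qs MV ME m t \<longleftrightarrow> (\<forall>a b. a\<in>t \<and> b\<in>t \<and> a\<noteq>m \<and> b\<noteq>m \<and> a\<noteq>b \<longrightarrow>
   (({m,a}\<in>ME \<or> {a,b}\<in>ME) \<longrightarrow> m\<in>MV) \<and> ({m,a}\<in>ME \<and> {a,b}\<in>ME \<longrightarrow> a\<in>MV)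
   \<and> ({m,a}\<in>ME \<and> {m,b}\<in>ME \<longrightarrow> a\<in>MV \<or> b\<in>MV))"

definition P3 where "P3 MV ME m a b \<longleftrightarrow>
   (({m,a}\<in>ME \<or> {a,b}\<in>ME) \<longrightarrow> m\<in>MV) \<and> ({m,a}\<in>ME \<and> {a,b}\<in>ME \<longrightarrow> a\<in>MV)
   \<and> ({m,a}\<in>ME \<and> {m,b}\<in>ME \<longrightarrow> a\<in>MV \<or> b\<in>MV)"

lemma Qs_explicit:
  assumes "m\<noteq>a" "m\<noteq>b" "a\<noteq>b"
  shows "Qs MV ME m {m,a,b} \<longleftrightarrow> P3 MV ME m a b \<and> P3 MV ME m b a"
proof
  assume "Qs MV ME m {m,a,b}"
  then show "P3 MV ME m a b \<and> P3 MV ME m b a"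
    unfolding Qs_def P3_def using assms
    by (metis insertCI)
next
  assume "P3 MV ME m a b \<and> P3 MV ME m b a"
  show "Qs MV ME m {m,a,b}" unfolding Qs_def
  proof (intro allI impI)
    fix x y assume xy: "x \<in> {m,a,b} \<and> y \<in> {m,a,b} \<and> x \<noteq> m \<and> y \<noteq> m \<and> x \<noteq> y"
    then have "(x=a \<and> y=b) \<or> (x=b \<and> y=a)" by auto
    then show "(({m,x}\<in>ME \<or> {x,y}\<in>ME) \<longrightarrow> m\<in>MV) \<and> ({m,x}\<in>ME \<and> {x,y}\<in>ME \<longrightarrow> x\<in>MV)
   \<and> ({m,x}\<in>ME \<and> {m,y}\<in>ME \<longrightarrow> x\<in>MV \<or> y\<in>MV)"
      using \<open>P3 MV ME m a b \<and> P3 MV ME m b a\<close> unfolding P3_def by (elim disjE) blast+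
  qed
qed

lemma restore:
  assumes d: "m\<noteq>a" "m\<noteq>b" "a\<noteq>b" and q: "Qs MV ME m {m,a,b}"
    and e: "e \<in> {{m,a},{m,b},{a,b}}"
  shows "Qs MV (insert e ME) m {m,a,b} \<or>
     (\<exists>v\<in>{m,a,b}. v\<notin>MV \<and> Qs (insert v MV) (insert e ME) m {m,a,b})"
proof -
  have ab: "{b,a} = {a,b}" by auto
  have ne: "{m,a} \<noteq> {m,b}" "{m,a} \<noteq> {a,b}" "{m,b} \<noteq> {a,b}" using d by (auto simp: doubleton_eq_iff)
  from q have P: "P3 MV ME m a b" "P3 MV ME m b a" using Qs_explicit[OF d] by auto
  let ?A = "{m,a}\<in>ME" and ?B = "{m,b}\<in>ME" and ?C = "{a,b}\<in>ME"
  have key: "P3 MV' ME' m a b \<and> P3 MV' ME' m b a \<longleftrightarrow>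
     (({m,a}\<in>ME' \<or> {m,b}\<in>ME' \<or> {a,b}\<in>ME') \<longrightarrow> m\<in>MV') \<and>
     ({m,a}\<in>ME' \<and> {a,b}\<in>ME' \<longrightarrow> a\<in>MV') \<and>
     ({m,b}\<in>ME' \<and> {a,b}\<in>ME' \<longrightarrow> b\<in>MV') \<and>
     ({m,a}\<in>ME' \<and> {m,b}\<in>ME' \<longrightarrow> a\<in>MV' \<or> b\<in>MV')" for MV' ME'
    unfolding P3_def ab by blast
  have P': "(?A \<or> ?B \<or> ?C \<longrightarrow> m\<in>MV)" "(?A \<and> ?C \<longrightarrow> a\<in>MV)" "(?B \<and> ?C \<longrightarrow> b\<in>MV)"
     "(?A \<and> ?B \<longrightarrow> a\<in>MV \<or> b\<in>MV)" using P key by blast+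
  have G: "Qs MV' (insert e ME) m {m,a,b} \<longleftrightarrow>
     (({m,a}\<in>insert e ME \<or> {m,b}\<in>insert e ME \<or> {a,b}\<in>insert e ME) \<longrightarrow> m\<in>MV') \<and>
     ({m,a}\<in>insert e ME \<and> {a,b}\<in>insert e ME \<longrightarrow> a\<in>MV') \<and>
     ({m,b}\<in>insert e ME \<and> {a,b}\<in>insert e ME \<longrightarrow> b\<in>MV') \<and>
     ({m,a}\<in>insert e ME \<and> {m,b}\<in>insert e ME \<longrightarrow> a\<in>MV' \<or> b\<in>MV')" for MV'
    unfolding Qs_explicit[OF d] key ..
  show ?thesis
    using e
  proof (elim insertE emptyE)
    assume e: "e = {m,a}"
    have i1: "{m,a} \<in> insert e ME" "({m,b} \<in> insert e ME) = ?B" "({a,b} \<in> insert e ME) = ?C"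
      using e ne by auto
    show ?thesis
    proof (cases "m \<in> MV")
      case False
      then show ?thesis unfolding G i1 using P' by (intro disjI2 bexI[where x=m]) auto
    next
      case m: True
      show ?thesis
      proof (cases "a \<notin> MV \<and> (?C \<or> (?B \<and> b \<notin> MV))")
        case True
        then show ?thesis unfolding G i1 using P' m by (intro disjI2 bexI[where x=a]) auto
      next
        case False
        then show ?thesis unfolding G i1 using P' m by (intro disjI1) auto
      qed
    qed
  next
    assume e: "e = {m,b}"
    have i1: "{m,b} \<in> insert e ME" "({m,a} \<in> insert e ME) = ?A" "({a,b} \<in> insert e ME) = ?C"
      using e ne by auto
    show ?thesis
    proof (cases "m \<in> MV")
      case False
      then show ?thesis unfolding G i1 using P' by (intro disjI2 bexI[where x=m]) auto
    next
      case m: True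
      show ?thesis
      proof (cases "b \<notin> MV \<and> (?C \<or> (?A \<and> a \<notin> MV))")
        case True
        then show ?thesis unfolding G i1 using P' m by (intro disjI2 bexI[where x=b]) auto
      next
        case False
        then show ?thesis unfolding G i1 using P' m by (intro disjI1) auto
      qed
    qed
  next
    assume e: "e = {a,b}"
    have i1: "{a,b} \<in> insert e ME" "({m,b} \<in> insert e ME) = ?B" "({m,a} \<in> insert e ME) = ?A"
      using e ne by auto
    show ?thesis
    proof (cases "m \<in> MV")
      case False
      then show ?thesis unfolding G i1 using P' by (intro disjI2 bexI[where x=m]) auto
    next
      case m: True
      show ?thesis
      proof (cases "?A \<and> a \<notin> MV")
        case True
        then show ?thesis unfolding G i1 using P' m by (intro disjI2 bexI[where x=a]) auto
      next
        case F1: False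
        show ?thesis
        proof (cases "?B \<and> b \<notin> MV")
          case True
          then show ?thesis unfolding G i1 using P' m F1 by (intro disjI2 bexI[where x=b]) auto
        next
          case False
          then show ?thesis unfolding G i1 using P' m F1 by (intro disjI1) auto
        qed
      qed
    qed
  qed
qed

lemma Qs_other:
  assumes "m \<in> t" "\<not> e \<subseteq> t"
  shows "Qs MV (insert e ME) m t \<longleftrightarrow> Qs MV ME m t"
proof -
  have h: "\<And>a b. a\<in>t \<Longrightarrow> b\<in>t \<Longrightarrow> ({a,b} \<in> insert e ME) = ({a,b}\<in>ME)"
    using assms by auto
  show ?thesis unfolding Qs_def
  proof (intro iffI allI impI)
    fix a b assume H: "\<forall>a b. a \<in> t \<and> b \<in> t \<and> a \<noteq> m \<and> b \<noteq> m \<and> a \<noteq> b \<longrightarrow>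
      (({m,a}\<in>insert e ME \<or> {a,b}\<in>insert e ME) \<longrightarrow> m\<in>MV) \<and> ({m,a}\<in>insert e ME \<and> {a,b}\<in>insert e ME \<longrightarrow> a\<in>MV)
   \<and> ({m,a}\<in>insert e ME \<and> {m,b}\<in>insert e ME \<longrightarrow> a\<in>MV \<or> b\<in>MV)"
      and ab: "a \<in> t \<and> b \<in> t \<and> a \<noteq> m \<and> b \<noteq> m \<and> a \<noteq> b"
    then show "(({m,a}\<in>ME \<or> {a,b}\<in>ME) \<longrightarrow> m\<in>MV) \<and> ({m,a}\<in>ME \<and> {a,b}\<in>ME \<longrightarrow> a\<in>MV)
   \<and> ({m,a}\<in>ME \<and> {m,b}\<in>ME \<longrightarrow> a\<in>MV \<or> b\<in>MV)" by blast
  next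
    fix a b assume H: "\<forall>a b. a \<in> t \<and> b \<in> t \<and> a \<noteq> m \<and> b \<noteq> m \<and> a \<noteq> b \<longrightarrow>
      (({m,a}\<in>ME \<or> {a,b}\<in>ME) \<longrightarrow> m\<in>MV) \<and> ({m,a}\<in>ME \<and> {a,b}\<in>ME \<longrightarrow> a\<in>MV)
   \<and> ({m,a}\<in>ME \<and> {m,b}\<in>ME \<longrightarrow> a\<in>MV \<or> b\<in>MV)"
      and ab: "a \<in> t \<and> b \<in> t \<and> a \<noteq> m \<and> b \<noteq> m \<and> a \<noteq> b"
    have "({m,a} \<in> insert e ME) = ({m,a}\<in>ME)" "({m,b} \<in> insert e ME) = ({m,b}\<in>ME)"
      "({a,b} \<in> insert e ME) = ({a,b}\<in>ME)" using h ab assms(1) by auto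
    note eqs = this
    show "(({m,a}\<in>insert e ME \<or> {a,b}\<in>insert e ME) \<longrightarrow> m\<in>MV) \<and> ({m,a}\<in>insert e ME \<and> {a,b}\<in>insert e ME \<longrightarrow> a\<in>MV)
   \<and> ({m,a}\<in>insert e ME \<and> {m,b}\<in>insert e ME \<longrightarrow> a\<in>MV \<or> b\<in>MV)" unfolding eqs using H ab by blast
  qed
qed


lemma Qs_mono: "Qs MV ME m t \<Longrightarrow> MV \<subseteq> MV' \<Longrightarrow> Qs MV' ME m t"
  unfolding Qs_def by blast

lemma Qs_empty: "Qs MV {} m t" unfolding Qs_def by auto

lemma MV_snoc[simp]:
  "marked_vertices (h @ [AMove v]) = insert v (marked_vertices h)"
  "marked_vertices (h @ [BMove e]) = marked_vertices h"
  "marked_edges (h @ [AMove v]) = marked_edges h"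
  "marked_edges (h @ [BMove e]) = insert e (marked_edges h)"
  "marked_vertices [] = {}" "marked_edges [] = {}"
  unfolding marked_vertices_def marked_edges_def by auto

lemma legal_snoc:
  "legal_hist V E (h @ [x]) \<longleftrightarrow> legal_hist V E h \<and>
     (even (length h) \<longrightarrow> (\<exists>v. x = AMove v \<and> v \<in> V \<and> v \<notin> marked_vertices h)) \<and>
     (odd (length h) \<longrightarrow> (\<exists>e. x = BMove e \<and> e \<in> E \<and> e \<notin> marked_edges h))"
  unfolding legal_hist_def by (simp add: nth_append All_less_Suc, blast)

lemma consistent_snoc:
  "consistent \<sigma> (h @ [x]) \<longleftrightarrow> consistent \<sigma> h \<and>
     (odd (length h) \<longrightarrow> x = BMove (\<sigma> h))"
  unfolding consistent_def by (simp add: nth_append All_less_Suc, blast)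

lemma finite_ME: "finite (marked_edges h)"
proof -
  have "marked_edges h \<subseteq> (\<lambda>m. case m of BMove e \<Rightarrow> e | AMove v \<Rightarrow> {}) ` set h"
    unfolding marked_edges_def by force
  then show ?thesis by (rule finite_subset) simp
qed

lemma score_le:
  assumes "\<forall>v\<in>V. vertex_score h v \<le> 3"
  shows "score V h \<le> 3"
proof (cases "V = {}")
  case True then show ?thesis by (simp add: score_def)
next
  case False then show ?thesis unfolding score_def using assms by (intro cSUP_least) auto
qed

locale vemg =
  fixes V :: "'v set" and E :: "'v set set" and GT :: "'v set set" and mark :: "'v set \<Rightarrow> 'v"
  assumes simple: "\<And>e. e \<in> E \<Longrightarrow> e \<subseteq> V \<and> card e = 2"
    and tri: "\<And>t. t \<in> GT \<Longrightarrow> \<exists>a b c. t = {a,b,c} \<and> a\<noteq>b \<and> b\<noteq>c \<and> a\<noteq>c \<and> {a,b}\<in>E \<and> {b,c}\<in>E \<and> {a,c}\<in>E"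
    and uniq: "\<And>e. e \<in> E \<Longrightarrow> \<exists>!t. t \<in> GT \<and> e \<subseteq> t"
    and markin: "\<And>t. t \<in> GT \<Longrightarrow> mark t \<in> t"
    and fewU: "\<And>x. x \<in> V \<Longrightarrow> finite {t\<in>GT. x\<in>t \<and> mark t \<noteq> x} \<and> card {t\<in>GT. x\<in>t \<and> mark t \<noteq> x} \<le> 2"
begin

lemma tri3:
  assumes "t \<in> GT"
  shows "\<exists>x y. t = {mark t, x, y} \<and> mark t \<noteq> x \<and> mark t \<noteq> y \<and> x \<noteq> y"
proof -
  obtain a b c where t: "t = {a,b,c}" "a\<noteq>b" "b\<noteq>c" "a\<noteq>c" using tri[OF assms] by blast
  define m where "m = mark t"
  have "m \<in> t" using markin[OF assms] m_def by simp
  then have "m \<in> {a,b,c}" using t(1) by simp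
  then have "\<exists>x y. t = {m, x, y} \<and> m \<noteq> x \<and> m \<noteq> y \<and> x \<noteq> y"
  proof (elim insertE emptyE)
    assume ma: "m = a"
    have "t = {m,b,c} \<and> m \<noteq> b \<and> m \<noteq> c \<and> b \<noteq> c" using t ma by simp
    then show ?thesis by blast
  next
    assume mb: "m = b"
    have "t = {m,a,c} \<and> m \<noteq> a \<and> m \<noteq> c \<and> a \<noteq> c" using t mb by (simp add: insert_commute)
    then show ?thesis by blast
  next
    assume mc: "m = c"
    have "{a,b,c} = {c,a,b}" by (simp add: insert_commute)
    then have "t = {m,a,b} \<and> m \<noteq> a \<and> m \<noteq> b \<and> a \<noteq> b" using t mc by simp
    then show ?thesis by blast
  qed
  then show ?thesis unfolding m_def .
qed

lemma tri_V: "t \<in> GT \<Longrightarrow> t \<subseteq> V"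
proof -
  assume "t \<in> GT"
  then obtain a b c where t: "t = {a,b,c}" "{a,b}\<in>E" "{b,c}\<in>E" using tri by blast
  then show "t \<subseteq> V" using simple[OF t(2)] simple[OF t(3)] by auto
qed

lemma pair_cases:
  assumes "e \<in> E" "e \<subseteq> {m,a,b}"
  shows "e \<in> {{m,a},{m,b},{a,b}}"
proof -
  obtain x y where e: "e = {x,y}" "x \<noteq> y" using simple[OF assms(1)] by (auto simp: card_2_iff)
  have "x \<in> {m,a,b}" "y \<in> {m,a,b}" using assms e by auto
  then show ?thesis unfolding e(1) using e(2)
    by (elim insertE emptyE) (simp_all add: insert_commute)
qed

definition T where "T e = (THE t. t \<in> GT \<and> e \<subseteq> t)"

lemma T: "e \<in> E \<Longrightarrow> T e \<in> GT \<and> e \<subseteq> T e"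
  unfolding T_def by (rule theI') (rule uniq)

lemma T_uniq: "e \<in> E \<Longrightarrow> t \<in> GT \<Longrightarrow> e \<subseteq> t \<Longrightarrow> t = T e"
  unfolding T_def using the1_equality[OF uniq, of e t] by auto

definition Inv where "Inv MV ME \<longleftrightarrow> ME \<subseteq> E \<and> (\<forall>t\<in>GT. Qs MV ME (mark t) t)"

lemma Inv_mono: "Inv MV ME \<Longrightarrow> Inv (insert v MV) ME"
  unfolding Inv_def by (auto intro: Qs_mono)

lemma Inv_empty: "Inv MV {}" by (simp add: Inv_def Qs_empty)

lemma obtain_tri:
  assumes "t \<in> GT"
  obtains m x y where "m = mark t" "t = {m,x,y}" "m \<noteq> x" "m \<noteq> y" "x \<noteq> y"
  using tri3[OF assms] by blast


lemma Inv_step: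
  assumes I: "Inv MV ME" and e: "e\<in>E" and u: "u\<in>V" "u\<notin>MV"
  shows "\<exists>v. v\<in>V \<and> v\<notin>MV \<and> Inv (insert v MV) (insert e ME)"
proof -
  define t0 where "t0 = T e"
  have t0: "t0 \<in> GT" "e \<subseteq> t0" using T[OF e] t0_def by auto
  obtain m x y where xy: "m = mark t0" "t0 = {m,x,y}" "m \<noteq> x" "m \<noteq> y" "x \<noteq> y"
    using obtain_tri[OF t0(1)] by blast
  have Qt0: "Qs MV ME (mark t0) t0" using I t0(1) unfolding Inv_def by blast
  have "Qs MV ME m t0" using Qt0 xy(1) by simp
  then have q0: "Qs MV ME m {m,x,y}" using xy(2) by simp
  have ep: "e \<in> {{m,x},{m,y},{x,y}}" using pair_cases[OF e, of m x y] t0(2) xy(2) by simp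
  have other: "Qs MV' (insert e ME) (mark t) t = Qs MV' ME (mark t) t"
    if "t\<in>GT" "t \<noteq> t0" for t MV'
  proof -
    have "\<not> e \<subseteq> t"
    proof
      assume "e \<subseteq> t"
      then have "t = T e" by (rule T_uniq[OF e that(1)])
      then show False using that(2) t0_def by simp
    qed
    then show ?thesis by (rule Qs_other[OF markin[OF that(1)]])
  qed
  have Eins: "insert e ME \<subseteq> E" using I e by (auto simp: Inv_def)
  have IS: "Inv MV' (insert e ME)" if Q: "Qs MV' (insert e ME) m {m,x,y}" and M: "MV \<subseteq> MV'" for MV'
    unfolding Inv_def
  proof (intro conjI ballI Eins)
    fix t assume t: "t \<in> GT"
    show "Qs MV' (insert e ME) (mark t) t"
    proof (cases "t = t0")
      case True
      have "Qs MV' (insert e ME) m t0" using Q xy(2) by simp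
      then have "Qs MV' (insert e ME) (mark t0) t0" using xy(1) by simp
      then show ?thesis using True by simp
    next
      case False
      have "Qs MV ME (mark t) t" using I t by (simp add: Inv_def)
      then have "Qs MV' ME (mark t) t" using M by (rule Qs_mono)
      then show ?thesis using other[OF t False] by simp
    qed
  qed
  from restore[OF xy(3,4,5) q0 ep] show ?thesis
  proof
    assume A: "Qs MV (insert e ME) m {m, x, y}"
    have "Inv MV (insert e ME)" using IS[OF A] by simp
    then have "Inv (insert u MV) (insert e ME)" by (rule Inv_mono)
    then show ?thesis using u by blast
  next
    assume "\<exists>v\<in>{m,x,y}. v\<notin>MV \<and> Qs (insert v MV) (insert e ME) m {m,x,y}"
    then obtain v where v: "v \<in> {m,x,y}" "v \<notin> MV" "Qs (insert v MV) (insert e ME) m {m,x,y}"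
      by blast
    have "v \<in> t0" using v(1) xy(2) by simp
    then have "v \<in> V" using tri_V t0(1) by blast
    moreover have "Inv (insert v MV) (insert e ME)" using IS[OF v(3)] by blast
    ultimately show ?thesis using v(2) by blast
  qed
qed

lemma score2:
  assumes I: "Inv MV ME" and fin: "finite ME" and v: "v \<notin> MV" "v \<in> V"
  shows "card {e\<in>ME. v\<in>e} \<le> 2"
proof -
  let ?U = "{t\<in>GT. v\<in>t \<and> mark t \<noteq> v}"
  have sub: "{e\<in>ME. v\<in>e} \<subseteq> (\<Union>t\<in>?U. {e\<in>ME. e\<subseteq>t \<and> v\<in>e})"
  proof
    fix e assume "e \<in> {e\<in>ME. v\<in>e}"
    then have e: "e\<in>ME" "v\<in>e" by auto
    have eE: "e\<in>E" using I e by (auto simp: Inv_def)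
    define t where "t = T e"
    have t: "t\<in>GT" "e\<subseteq>t" using T[OF eE] t_def by auto
    have "mark t \<noteq> v"
    proof
      assume mv: "mark t = v"
      obtain m x y where xy: "m = mark t" "t = {m,x,y}" "m \<noteq> x" "m \<noteq> y" "x \<noteq> y"
        using obtain_tri[OF t(1)] by blast
      have "e \<in> {{m,x},{m,y},{x,y}}" using pair_cases eE t(2) xy(2) by auto
      moreover have "v = m" using mv xy(1) by simp
      ultimately have ee: "e = {m,x} \<or> e = {m,y}" using e(2) xy(3,4,5) by auto
      have Q: "Qs MV ME m t" using I t(1) xy(1) by (auto simp: Inv_def)
      have "x \<in> t" "y \<in> t" using xy(2) by auto
      then have "m \<in> MV" using Q ee e(1) xy(3,4,5) unfolding Qs_def by blast
      then show False using mv xy(1) v(1) by simp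
    qed
    then show "e \<in> (\<Union>t\<in>?U. {e\<in>ME. e\<subseteq>t \<and> v\<in>e})" using t e by auto
  qed
  have c1: "card {e\<in>ME. e\<subseteq>t \<and> v\<in>e} \<le> 1" if t: "t\<in>?U" for t
  proof -
    obtain m x y where xy: "m = mark t" "t = {m,x,y}" "m \<noteq> x" "m \<noteq> y" "x \<noteq> y"
      using obtain_tri[of t] t by blast
    have "\<exists>w. t = {m,v,w} \<and> v \<noteq> w \<and> m \<noteq> w \<and> m \<noteq> v"
    proof -
      have "m \<noteq> v" "v \<in> t" using t xy(1) by auto
      then have "v = x \<or> v = y" using xy(2) by auto
      then show ?thesis
      proof
        assume "v = x" then show ?thesis using xy(2-5) by blast
      next
        assume "v = y" then show ?thesis using xy(2-5) by (intro exI[of _ x]) auto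
      qed
    qed
    then obtain w where w: "t = {m,v,w}" "v \<noteq> w" "m \<noteq> w" "m \<noteq> v" by blast
    have Q: "Qs MV ME m t" using I t xy(1) by (auto simp: Inv_def)
    have "v \<in> t" "w \<in> t" using w by auto
    then have nb: "\<not> ({m,v}\<in>ME \<and> {v,w}\<in>ME)" using Q v(1) w unfolding Qs_def by blast
    have sub1: "{e\<in>ME. e\<subseteq>t \<and> v\<in>e} \<subseteq> {c. c \<in> ME \<and> (c = {m,v} \<or> c = {v,w})}"
    proof
      fix e assume "e \<in> {e\<in>ME. e\<subseteq>t \<and> v\<in>e}"
      then have e: "e\<in>ME" "e \<subseteq> {m,v,w}" "v \<in> e" using w by auto
      have "e \<in> E" using I e by (auto simp: Inv_def)
      then have "e \<in> {{m,v},{m,w},{v,w}}" using pair_cases e(2) by blast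
      moreover have "e \<noteq> {m,w}" using e(3) w by auto
      ultimately show "e \<in> {c. c \<in> ME \<and> (c = {m,v} \<or> c = {v,w})}" using e by auto
    qed
    obtain c where "{c. c \<in> ME \<and> (c = {m,v} \<or> c = {v,w})} \<subseteq> {c}"
    proof (cases "{m,v} \<in> ME")
      case True then show ?thesis using that[of "{m,v}"] nb by auto
    next
      case False then show ?thesis using that[of "{v,w}"] by auto
    qed
    with sub1 have "{e\<in>ME. e\<subseteq>t \<and> v\<in>e} \<subseteq> {c}" by blast
    then have "card {e\<in>ME. e\<subseteq>t \<and> v\<in>e} \<le> card {c}" by (intro card_mono) auto
    then show ?thesis by simp
  qed
  have finU: "finite ?U" using fewU[OF v(2)] by blast
  have "card {e\<in>ME. v\<in>e} \<le> card (\<Union>t\<in>?U. {e\<in>ME. e\<subseteq>t \<and> v\<in>e})"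
    by (intro card_mono[OF _ sub] finite_subset[OF _ fin]) blast
  also have "\<dots> \<le> (\<Sum>t\<in>?U. card {e\<in>ME. e\<subseteq>t \<and> v\<in>e})"
    by (rule card_UN_le[OF finU])
  also have "\<dots> \<le> (\<Sum>t\<in>?U. 1)" by (rule sum_mono) (rule c1)
  also have "\<dots> = card ?U" by simp
  also have "\<dots> \<le> 2" using fewU[OF v(2)] by blast
  finally show ?thesis .
qed


definition alice :: "'v move list \<Rightarrow> 'v" where
 "alice h = (if \<exists>v. v\<in>V \<and> v\<notin>marked_vertices h \<and> Inv (insert v (marked_vertices h)) (marked_edges h)
   then SOME v. v\<in>V \<and> v\<notin>marked_vertices h \<and> Inv (insert v (marked_vertices h)) (marked_edges h)
   else SOME v. v\<in>V \<and> v\<notin>marked_vertices h)"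

lemma alice_legal:
  assumes "u\<in>V" "u\<notin>marked_vertices h"
  shows "alice h \<in> V \<and> alice h \<notin> marked_vertices h"
proof (cases "\<exists>v. v\<in>V \<and> v\<notin>marked_vertices h \<and> Inv (insert v (marked_vertices h)) (marked_edges h)")
  case True
  have a: "alice h = (SOME v. v\<in>V \<and> v\<notin>marked_vertices h \<and> Inv (insert v (marked_vertices h)) (marked_edges h))"
    unfolding alice_def using True by (rule if_P)
  show ?thesis unfolding a using someI_ex[OF True] by blast
next
  case False
  have ex: "\<exists>v. v\<in>V \<and> v\<notin>marked_vertices h" using assms by blast
  have a: "alice h = (SOME v. v\<in>V \<and> v\<notin>marked_vertices h)"
    unfolding alice_def using False by (rule if_not_P)
  show ?thesis unfolding a using someI_ex[OF ex] by blast
qed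

lemma alice_inv:
  assumes ex: "\<exists>v. v\<in>V \<and> v\<notin>marked_vertices h \<and> Inv (insert v (marked_vertices h)) (marked_edges h)"
  shows "Inv (insert (alice h) (marked_vertices h)) (marked_edges h)"
proof -
  have a: "alice h = (SOME v. v\<in>V \<and> v\<notin>marked_vertices h \<and> Inv (insert v (marked_vertices h)) (marked_edges h))"
    unfolding alice_def using ex by (rule if_P)
  show ?thesis unfolding a using someI_ex[OF ex] by blast
qed

primrec play :: "('v move list \<Rightarrow> 'v set) \<Rightarrow> nat \<Rightarrow> 'v move list" where
  "play \<sigma> 0 = []"
| "play \<sigma> (Suc n) = play \<sigma> n @ [if even n then AMove (alice (play \<sigma> n)) else BMove (\<sigma> (play \<sigma> n))]"

lemma len_play[simp]: "length (play \<sigma> n) = n"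
  by (induction n) auto

lemma take_play: "k \<le> n \<Longrightarrow> take k (play \<sigma> n) = play \<sigma> k"
proof (induction n)
  case 0 then show ?case by simp
next
  case (Suc n)
  show ?case
  proof (cases "k = Suc n")
    case True then show ?thesis by (metis len_play take_all order_refl)
  next
    case False then have "k \<le> n" using Suc.prems by simp
    then show ?thesis using Suc.IH by simp
  qed
qed

lemma map_play: "map (\<lambda>n. play \<sigma> (Suc n) ! n) [0..<n] = play \<sigma> n"
  by (induction n) (auto simp: nth_append)

definition good where "good \<sigma> n \<longleftrightarrow> legal_hist V E (play \<sigma> n) \<and> consistent \<sigma> (play \<sigma> n) \<and>
   (odd n \<longrightarrow> Inv (marked_vertices (play \<sigma> n)) (marked_edges (play \<sigma> n))) \<and>
   (even n \<longrightarrow> n = 0 \<or> (\<exists>j e. n = Suc j \<and> e \<in> E \<and> play \<sigma> n = play \<sigma> j @ [BMove e] \<and>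
        Inv (marked_vertices (play \<sigma> j)) (marked_edges (play \<sigma> j))))"


lemma good_play:
  assumes sig: "legal_bob_strategy V E \<sigma>"
  shows "(\<forall>k<n. \<not> terminal V E (play \<sigma> k)) \<Longrightarrow> good \<sigma> n"
proof (induction n)
  case 0 show ?case by (simp add: good_def legal_hist_def consistent_def)
next
  case (Suc n)
  have NT: "\<forall>k<n. \<not>terminal V E (play \<sigma> k)" and nt: "\<not> terminal V E (play \<sigma> n)"
    using Suc.prems by auto
  have g: "good \<sigma> n" using Suc.IH NT by blast
  let ?h = "play \<sigma> n"
  show ?case
  proof (cases "even n")
    case True
    then obtain u where u: "u\<in>V" "u\<notin>marked_vertices ?h" using nt by (auto simp: terminal_def)
    have al: "alice ?h \<in> V" "alice ?h \<notin> marked_vertices ?h" using alice_legal[OF u] by auto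
    have ex: "\<exists>v. v\<in>V \<and> v\<notin>marked_vertices ?h \<and> Inv (insert v (marked_vertices ?h)) (marked_edges ?h)"
    proof -
      from g True have "n = 0 \<or> (\<exists>j e. n = Suc j \<and> e \<in> E \<and> ?h = play \<sigma> j @ [BMove e] \<and>
        Inv (marked_vertices (play \<sigma> j)) (marked_edges (play \<sigma> j)))" by (simp add: good_def)
      then show ?thesis
      proof
        assume "n = 0" then show ?thesis using u by (auto simp: Inv_empty)
      next
        assume "\<exists>j e. n = Suc j \<and> e \<in> E \<and> ?h = play \<sigma> j @ [BMove e] \<and>
          Inv (marked_vertices (play \<sigma> j)) (marked_edges (play \<sigma> j))"
        then obtain j e where j: "e \<in> E" "?h = play \<sigma> j @ [BMove e]"
          "Inv (marked_vertices (play \<sigma> j)) (marked_edges (play \<sigma> j))" by blast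
        have mv: "marked_vertices ?h = marked_vertices (play \<sigma> j)"
          "marked_edges ?h = insert e (marked_edges (play \<sigma> j))" using j(2) by simp_all
        show ?thesis unfolding mv using Inv_step[OF j(3) j(1)] u mv by auto
      qed
    qed
    have "Inv (insert (alice ?h) (marked_vertices ?h)) (marked_edges ?h)" by (rule alice_inv[OF ex])
    then show ?thesis using g True al unfolding good_def by (simp add: legal_snoc consistent_snoc)
  next
    case False
    have "legal_hist V E ?h" "consistent \<sigma> ?h" using g by (auto simp: good_def)
    then have s: "\<sigma> ?h \<in> E" "\<sigma> ?h \<notin> marked_edges ?h"
      using sig nt False unfolding legal_bob_strategy_def by auto
    have I: "Inv (marked_vertices ?h) (marked_edges ?h)" using g False by (simp add: good_def)
    have "legal_hist V E (play \<sigma> (Suc n))" "consistent \<sigma> (play \<sigma> (Suc n))"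
      using g False s by (simp_all add: legal_snoc consistent_snoc good_def)
    then show ?thesis unfolding good_def using False s I by auto
  qed
qed


lemma good_score:
  assumes g: "good \<sigma> n" and v: "v \<in> V"
  shows "vertex_score (play \<sigma> n) v \<le> 3"
proof (cases "odd n")
  case True
  then have I: "Inv (marked_vertices (play \<sigma> n)) (marked_edges (play \<sigma> n))" using g unfolding good_def by blast
  have c: "card {e\<in>marked_edges (play \<sigma> n). v\<in>e} \<le> 3" if "v \<notin> marked_vertices (play \<sigma> n)"
    using score2[OF I finite_ME that v] by linarith
  show ?thesis unfolding vertex_score_def using c by simp
next
  case False
  then have "n = 0 \<or> (\<exists>j e. n = Suc j \<and> e \<in> E \<and> play \<sigma> n = play \<sigma> j @ [BMove e] \<and>
        Inv (marked_vertices (play \<sigma> j)) (marked_edges (play \<sigma> j)))" using g unfolding good_def by blast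
  then show ?thesis
  proof
    assume "n = 0" then show ?thesis by (simp add: vertex_score_def)
  next
    assume "\<exists>j e. n = Suc j \<and> e \<in> E \<and> play \<sigma> n = play \<sigma> j @ [BMove e] \<and>
        Inv (marked_vertices (play \<sigma> j)) (marked_edges (play \<sigma> j))"
    then obtain j e where j: "play \<sigma> n = play \<sigma> j @ [BMove e]"
        "Inv (marked_vertices (play \<sigma> j)) (marked_edges (play \<sigma> j))" by blast
    let ?M = "marked_edges (play \<sigma> j)"
    show ?thesis
    proof (cases "v \<in> marked_vertices (play \<sigma> j)")
      case True then show ?thesis unfolding vertex_score_def j(1) by simp
    next
      case False
      have c2: "card {e\<in>?M. v\<in>e} \<le> 2" using score2[OF j(2) finite_ME False v] .
      have fin: "finite {e\<in>?M. v\<in>e}" using finite_ME[of "play \<sigma> j"] by simp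
      have sub: "{e'\<in>insert e ?M. v\<in>e'} \<subseteq> insert e {e\<in>?M. v\<in>e}" by blast
      have "card {e'\<in>insert e ?M. v\<in>e'} \<le> card (insert e {e\<in>?M. v\<in>e})"
        by (rule card_mono[OF _ sub]) (simp add: fin)
      also have "\<dots> \<le> Suc (card {e\<in>?M. v\<in>e})"
        using fin by (simp add: card_insert_if)
      finally have c3: "card {e'\<in>insert e ?M. v\<in>e'} \<le> 3" using c2 by linarith
      have "vertex_score (play \<sigma> n) v = card {e'\<in>insert e ?M. v\<in>e'}"
        unfolding vertex_score_def j(1) using False by simp
      then show ?thesis using c3 by simp
    qed
  qed
qed


lemma good_legal: "good \<sigma> n \<Longrightarrow> legal_hist V E (play \<sigma> n) \<and> consistent \<sigma> (play \<sigma> n)"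
  unfolding good_def by (elim conjE) (intro conjI)

lemma bob_wins_le:
  assumes "bob_wins V E s"
  shows "s \<le> 3"
proof -
  obtain \<sigma> where sig: "legal_bob_strategy V E \<sigma>"
    and fin: "\<forall>h. legal_hist V E h \<and> consistent \<sigma> h \<and> terminal V E h \<longrightarrow> final_score_fin V h \<ge> enat s"
    and inf: "\<forall>f. (\<forall>n. legal_hist V E (map f [0..<n]) \<and> consistent \<sigma> (map f [0..<n]))
              \<longrightarrow> final_score_inf V f \<ge> enat s"
    using assms unfolding bob_wins_def by blast
  have sc: "enat (score V (play \<sigma> n)) \<le> 3" if g: "good \<sigma> n" for n
  proof -
    have "\<forall>v\<in>V. vertex_score (play \<sigma> n) v \<le> 3" using good_score[OF g] by blast
    then have "score V (play \<sigma> n) \<le> 3" by (rule score_le)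
    then show ?thesis by (simp add: numeral_eq_enat)
  qed
  show "s \<le> 3"
  proof (cases "\<exists>n. terminal V E (play \<sigma> n)")
    case True
    define n0 where "n0 = (LEAST n. terminal V E (play \<sigma> n))"
    have t0: "terminal V E (play \<sigma> n0)" unfolding n0_def using True by (rule LeastI_ex)
    have NT: "\<not> terminal V E (play \<sigma> k)" if "k < n0" for k
      using not_less_Least[OF that[unfolded n0_def]] .
    have gk: "good \<sigma> k" if "k \<le> n0" for k
      by (rule good_play[OF sig]) (use NT that in simp)
    have g0: "good \<sigma> n0" by (rule gk) simp
    have "final_score_fin V (play \<sigma> n0) \<le> 3"
      unfolding final_score_fin_def
    proof (rule SUP_least)
      fix k assume "k \<in> {..length (play \<sigma> n0)}"
      then have k: "k \<le> n0" by simp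
      have "take k (play \<sigma> n0) = play \<sigma> k" by (rule take_play[OF k])
      then show "enat (score V (take k (play \<sigma> n0))) \<le> 3" using sc[OF gk[OF k]] by simp
    qed
    moreover have "final_score_fin V (play \<sigma> n0) \<ge> enat s"
      using fin good_legal[OF g0] t0 by blast
    ultimately have "enat s \<le> 3" by (rule order_trans[rotated])
    then show "s \<le> 3" by (simp add: numeral_eq_enat)
  next
    case False
    define f where "f n = play \<sigma> (Suc n) ! n" for n
    have mf: "map f [0..<n] = play \<sigma> n" for n unfolding f_def by (rule map_play)
    have gn: "good \<sigma> n" for n by (rule good_play[OF sig]) (use False in blast)
    have "\<forall>n. legal_hist V E (map f [0..<n]) \<and> consistent \<sigma> (map f [0..<n])"
      unfolding mf using good_legal[OF gn] by blast
    then have "final_score_inf V f \<ge> enat s" using inf by blast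
    moreover have "final_score_inf V f \<le> 3" unfolding final_score_inf_def mf
    proof (rule SUP_least)
      fix n show "enat (score V (play \<sigma> n)) \<le> 3" by (rule sc[OF gn])
    qed
    ultimately have "enat s \<le> 3" by (rule order_trans)
    then show "s \<le> 3" by (simp add: numeral_eq_enat)
  qed
qed


end

theorem theorem3p1:
  fixes V :: "'v set" and E :: "'v set set"
    and pos :: "'v \<Rightarrow> complex" and arc_of :: "'v set \<Rightarrow> real \<Rightarrow> complex"
    and gray :: "complex set \<Rightarrow> bool" and mark :: "'v set \<Rightarrow> 'v"
  assumes graph: "simple_graph V E"
    and embedded: "plane_embedding V E pos arc_of"
    and i: "proper_face_2coloring V E pos arc_of gray"
    and ii: "\<forall>F\<in>gray_faces V E pos arc_of gray. \<exists>t. triangle_face E arc_of F t"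
    and iii: "\<forall>e\<in>E. \<exists>!t. t \<in> gray_triangles V E pos arc_of gray \<and> e \<subseteq> t"
    and iv: "\<forall>t\<in>gray_triangles V E pos arc_of gray. mark t \<in> t"
    and v: "\<forall>x\<in>V. finite {t \<in> gray_triangles V E pos arc_of gray. x \<in> t \<and> mark t \<noteq> x}
                  \<and> card {t \<in> gray_triangles V E pos arc_of gray. x \<in> t \<and> mark t \<noteq> x} \<le> 2"
  shows "col_ve V E \<le> 4"
proof -
  let ?GT = "gray_triangles V E pos arc_of gray"
  interpret vemg V E ?GT mark
  proof
    fix e assume "e \<in> E"
    then show "e \<subseteq> V \<and> card e = 2" using graph by (simp add: simple_graph_def)
  next
    fix t assume "t \<in> ?GT"
    then obtain F where "triangle_face E arc_of F t" unfolding gray_triangles_def by blast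
    then show "\<exists>a b c. t = {a,b,c} \<and> a\<noteq>b \<and> b\<noteq>c \<and> a\<noteq>c \<and> {a,b}\<in>E \<and> {b,c}\<in>E \<and> {a,c}\<in>E"
      unfolding triangle_face_def by blast
  next
    fix e assume "e \<in> E"
    then show "\<exists>!t. t \<in> ?GT \<and> e \<subseteq> t" using iii by blast
  next
    fix t assume "t \<in> ?GT"
    then show "mark t \<in> t" using iv by blast
  next
    fix x assume "x \<in> V"
    then show "finite {t\<in>?GT. x\<in>t \<and> mark t \<noteq> x} \<and> card {t\<in>?GT. x\<in>t \<and> mark t \<noteq> x} \<le> 2"
      using v by blast
  qed
  have "Sup {enat s | s. bob_wins V E s} \<le> 3"
  proof (rule Sup_least)
    fix x assume "x \<in> {enat s | s. bob_wins V E s}"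
    then obtain s where "x = enat s" "bob_wins V E s" by blast
    then show "x \<le> 3" using bob_wins_le by (simp add: numeral_eq_enat)
  qed
  then have "col_ve V E \<le> 3 + 1" unfolding col_ve_def by (rule add_right_mono)
  then show ?thesis by simp
qed

end
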